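(* Let $T$ be a tree such that for every high degree vertex $v$ of $T$, at most one connected component of $T-v$ has more than one vertex. Then $T$ has at most two high degree vertices.
   Context: A high degree vertex (HDV) of a tree is a vertex of degree at least $3$. *)

theory Defs
  imports Main
begin

definition simple_graph :: "'a set \<Rightarrow> 'a set set \<Rightarrow> bool" where
  "simple_graph V E \<longleftrightarrow> finite V \<and>
     (\<forall>e\<in>E. \<exists>u v. e = {u, v} \<and> u \<noteq> v \<and> u \<in> V \<and> v \<in> V)"

definition adj :: "'a set set \<Rightarrow> 'a \<Rightarrow> 'a \<Rightarrow> bool" where
  "adj E u v \<longleftrightarrow> {u, v} \<in> E"

definition reach :: "'a set \<Rightarrow> 'a set set \<Rightarrow> 'a \<Rightarrow> 'a \<Rightarrow> bool" where
  "reach V E u v \<longleftrightarrow> (\<exists>xs. xs \<noteq> [] \<and> hd xs = u \<and> last xs = v \<and> set xs \<subseteq> V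
                              \<and> successively (adj E) xs)"

definition connected_graph :: "'a set \<Rightarrow> 'a set set \<Rightarrow> bool" where
  "connected_graph V E \<longleftrightarrow> V \<noteq> {} \<and> (\<forall>u\<in>V. \<forall>v\<in>V. reach V E u v)"

definition has_cycle :: "'a set \<Rightarrow> 'a set set \<Rightarrow> bool" where
  "has_cycle V E \<longleftrightarrow> (\<exists>xs. length xs \<ge> 3 \<and> distinct xs \<and> set xs \<subseteq> V
                          \<and> successively (adj E) xs \<and> adj E (last xs) (hd xs))"

definition is_tree :: "'a set \<Rightarrow> 'a set set \<Rightarrow> bool" where
  "is_tree V E \<longleftrightarrow> simple_graph V E \<and> connected_graph V E \<and> \<not> has_cycle V E"

definition degree :: "'a set set \<Rightarrow> 'a \<Rightarrow> nat" where
  "degree E v = card {u. {u, v} \<in> E}"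

definition hdv :: "'a set \<Rightarrow> 'a set set \<Rightarrow> 'a \<Rightarrow> bool" where
  "hdv V E v \<longleftrightarrow> v \<in> V \<and> degree E v \<ge> 3"

definition components :: "'a set \<Rightarrow> 'a set set \<Rightarrow> 'a set set" where
  "components V E = {{u \<in> V. reach V E w u} | w. w \<in> V}"

definition del_vertex_V :: "'a set \<Rightarrow> 'a \<Rightarrow> 'a set" where
  "del_vertex_V V v = V - {v}"

definition del_vertex_E :: "'a set set \<Rightarrow> 'a \<Rightarrow> 'a set set" where
  "del_vertex_E E v = {e \<in> E. v \<notin> e}"

end

theory Submission
  imports Defs
begin

lemma adj_V:
  assumes "simple_graph V E" "adj E u v"
  shows "u \<in> V \<and> v \<in> V \<and> u \<noteq> v"
proof -
  obtain a b where "{u,v} = {a,b}" "a \<noteq> b" "a \<in> V" "b \<in> V"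
    using assms unfolding simple_graph_def adj_def by blast
  then show ?thesis by (auto simp: doubleton_eq_iff)
qed

lemma adj_sym: "adj E u v = adj E v u"
  by (simp add: adj_def insert_commute)

lemma shorten:
  "successively R xs \<Longrightarrow> xs \<noteq> [] \<Longrightarrow> \<exists>ys. distinct ys \<and> ys \<noteq> [] \<and> hd ys = hd xs \<and>
     last ys = last xs \<and> set ys \<subseteq> set xs \<and> successively R ys"
proof (induction "length xs" arbitrary: xs rule: less_induct)
  case less
  show ?case
  proof (cases "distinct xs")
    case True then show ?thesis using less.prems by blast
  next
    case False
    then obtain as x bs cs where xs: "xs = as @ [x] @ bs @ [x] @ cs"
      using not_distinct_decomp by blast
    let ?zs = "as @ [x] @ cs"
    have 1: "successively R (as @ [x])"
    proof -
      have "successively R ((as @ [x]) @ (bs @ [x] @ cs))" using less.prems(1) xs by simp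
      from successively_append_iff[THEN iffD1, OF this] show ?thesis by blast
    qed
    have 2: "successively R ([x] @ cs)"
    proof -
      have "successively R ((as @ [x] @ bs) @ ([x] @ cs))" using less.prems(1) xs by simp
      from successively_append_iff[THEN iffD1, OF this] show ?thesis by blast
    qed
    have s: "successively R ?zs" using 1 2 successively_append_iff[of R "as @ [x]" cs]
      by (cases cs) auto
    have l: "length ?zs < length xs" using xs by simp
    have h: "hd ?zs = hd xs" using xs by (cases as) auto
    have la: "last ?zs = last xs" using xs by (cases cs) auto
    have st: "set ?zs \<subseteq> set xs" using xs by auto
    from less.hyps[OF l s] obtain ys where "distinct ys \<and> ys \<noteq> [] \<and> hd ys = hd ?zs \<and>
     last ys = last ?zs \<and> set ys \<subseteq> set ?zs \<and> successively R ys" by auto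
    then show ?thesis using h la st by (intro exI[of _ ys]) auto
  qed
qed

lemma deg3_nb:
  assumes "hdv V E w"
  shows "\<exists>u. u \<noteq> y \<and> adj E w u"
proof (rule ccontr)
  assume "\<not> ?thesis"
  then have "{u. {u, w} \<in> E} \<subseteq> {y}" by (auto simp: adj_def insert_commute)
  then have "card {u. {u, w} \<in> E} \<le> card {y}" by (rule card_mono[rotated]) simp
  then show False using assms unfolding hdv_def degree_def by simp
qed

lemma nonleaf:
  assumes "hdv V E (last zs)" "zs \<noteq> []" "distinct (y # zs)"
    "successively (adj E) (y # zs)"
  shows "\<exists>u. u \<noteq> y \<and> adj E (hd zs) u"
proof (cases zs)
  case Nil then show ?thesis using assms by simp
next
  case (Cons w rest)
  show ?thesis
  proof (cases rest)
    case Nil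
    then show ?thesis using deg3_nb assms(1) Cons by simp
  next
    case (Cons w' r')
    then have "w' \<noteq> y" "adj E w w'" using assms \<open>zs = w # rest\<close> by auto
    then show ?thesis using \<open>zs = w # rest\<close> by auto
  qed
qed

lemma lemB:
  assumes tree: "is_tree V E"
    and H: "\<forall>v. hdv V E v \<longrightarrow>
           card {C \<in> components (del_vertex_V V v) (del_vertex_E E v). card C > 1} \<le> 1"
    and hy: "hdv V E y" and w: "w1 \<noteq> w2" "adj E y w1" "adj E y w2"
    and u: "u1 \<noteq> y" "adj E w1 u1" "u2 \<noteq> y" "adj E w2 u2"
  shows False
proof -
  have sg: "simple_graph V E" and nc: "\<not> has_cycle V E" using tree unfolding is_tree_def by auto
  have fin: "finite V" using sg unfolding simple_graph_def by auto
  have yV: "y \<in> V" using hy unfolding hdv_def by auto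
  define V' where "V' = del_vertex_V V y"
  define E' where "E' = del_vertex_E E y"
  define S where "S = {C \<in> components V' E'. card C > 1}"
  have adjE': "adj E' a b \<longleftrightarrow> adj E a b \<and> a \<noteq> y \<and> b \<noteq> y" for a b
    unfolding E'_def del_vertex_E_def adj_def by auto
  have V'V: "V' \<subseteq> V" unfolding V'_def del_vertex_V_def by auto
  have yV': "y \<notin> V'" unfolding V'_def del_vertex_V_def by auto
  have refl: "reach V' E' a a" if "a \<in> V'" for a
    unfolding reach_def using that by (intro exI[of _ "[a]"]) auto
  have comp: "{x\<in>V'. reach V' E' w x} \<in> S" if a: "adj E y w" "u \<noteq> y" "adj E w u" for w u
  proof -
    have "w \<in> V" "w \<noteq> y" "u \<in> V" "u \<noteq> w" using adj_V[OF sg a(1)] adj_V[OF sg a(3)] by auto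
    then have wV': "w \<in> V'" and uV': "u \<in> V'" using a(2) unfolding V'_def del_vertex_V_def by auto
    have r2: "reach V' E' w u" unfolding reach_def
      using wV' uV' a \<open>w \<noteq> y\<close> adjE' by (intro exI[of _ "[w,u]"]) auto
    let ?C = "{x\<in>V'. reach V' E' w x}"
    have "{w,u} \<subseteq> ?C" using refl[OF wV'] r2 wV' uV' by auto
    moreover have "finite ?C" using fin V'V by (metis (no_types, lifting) finite_subset mem_Collect_eq subsetI)
    ultimately have "card {w,u} \<le> card ?C" by (rule card_mono[rotated])
    then have "card ?C > 1" using \<open>u \<noteq> w\<close> by simp
    moreover have "?C \<in> components V' E'" unfolding components_def using wV' by blast
    ultimately show ?thesis unfolding S_def by blast
  qed
  have C1: "{x\<in>V'. reach V' E' w1 x} \<in> S" using comp w(2) u(1,2) .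
  have C2: "{x\<in>V'. reach V' E' w2 x} \<in> S" using comp w(3) u(3,4) .
  have neq: "{x\<in>V'. reach V' E' w1 x} \<noteq> {x\<in>V'. reach V' E' w2 x}"
  proof
    assume eq: "{x\<in>V'. reach V' E' w1 x} = {x\<in>V'. reach V' E' w2 x}"
    have "w2 \<in> V'" using adj_V[OF sg w(3)] unfolding V'_def del_vertex_V_def by auto
    then have "w2 \<in> {x\<in>V'. reach V' E' w2 x}" using refl by auto
    then have "reach V' E' w1 w2" using eq by auto
    then obtain xs where xs: "xs \<noteq> []" "hd xs = w1" "last xs = w2" "set xs \<subseteq> V'"
      "successively (adj E') xs" unfolding reach_def by auto
    obtain ys where ys: "distinct ys" "ys \<noteq> []" "hd ys = w1" "last ys = w2" "set ys \<subseteq> V'"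
      "successively (adj E') ys" using shorten[OF xs(5,1)] xs by auto
    obtain a b rest where ysab: "ys = a # b # rest"
      using ys w(1) by (metis last_ConsL list.collapse list.sel(1))
    have "has_cycle V E" unfolding has_cycle_def
    proof (intro exI[of _ "y # ys"] conjI)
      show "3 \<le> length (y # ys)" using ysab by simp
      show "distinct (y # ys)" using ys yV' by auto
      show "set (y # ys) \<subseteq> V" using ys yV V'V by auto
      have "successively (adj E) ys" using ys(6) by (rule successively_mono) (simp add: adjE')
      then show "successively (adj E) (y # ys)" using ysab ys(3) w(2) by simp
      show "adj E (last (y # ys)) (hd (y # ys))" using ys ysab w(3) adj_sym by (metis last_ConsR list.sel(1) list.simps(3))
    qed
    then show False using nc by simp
  qed
  have "components V' E' \<subseteq> Pow V'" unfolding components_def by auto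
  moreover have "finite (Pow V')" using finite_subset[OF V'V fin] by simp
  ultimately have "S \<subseteq> Pow V'" "finite (Pow V')" unfolding S_def by blast+
  then have "finite S" by (rule finite_subset)
  then have "card {{x\<in>V'. reach V' E' w1 x}, {x\<in>V'. reach V' E' w2 x}} \<le> card S"
    using C1 C2 by (intro card_mono) auto
  then have "card S \<ge> 2" using neq by simp
  moreover have "card S \<le> 1" unfolding S_def V'_def E'_def by (rule H[rule_format, OF hy])
  ultimately show False by linarith
qed

lemma lemA:
  assumes tree: "is_tree V E"
    and H: "\<forall>v. hdv V E v \<longrightarrow>
           card {C \<in> components (del_vertex_V V v) (del_vertex_E E v). card C > 1} \<le> 1"
    and d: "distinct (xs @ [y] @ ys)" and ne: "xs \<noteq> []" "ys \<noteq> []"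
    and s: "successively (adj E) (xs @ [y] @ ys)"
    and h: "hdv V E (hd xs)" "hdv V E (last ys)" "hdv V E y"
  shows False
proof -
  have s0: "successively (adj E) (xs @ [y])" and s1: "successively (adj E) (y # ys)"
    using s successively_append_iff[of "adj E" "xs @ [y]" ys] ne(2)
    by (auto simp: successively_Cons)
  have d1: "distinct (y # ys)" and d0: "distinct (y # rev xs)" using d by auto
  obtain u2 where u2: "u2 \<noteq> y" "adj E (hd ys) u2" using nonleaf[OF h(2) ne(2) d1 s1] by blast
  have sr: "successively (adj E) (y # rev xs)"
  proof -
    have "successively (\<lambda>a b. adj E b a) (xs @ [y])" using s0 adj_sym
      by (metis (no_types, lifting) successively_mono)
    moreover have eq: "rev (xs @ [y]) = y # rev xs" by simp
    ultimately show ?thesis using successively_rev[of "adj E" "xs @ [y]"] unfolding eq by blast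
  qed
  have hr: "hdv V E (last (rev xs))" using h(1) ne(1) by (simp add: last_rev)
  obtain u1 where u1: "u1 \<noteq> y" "adj E (hd (rev xs)) u1"
    using nonleaf[OF hr _ d0 sr] ne(1) by auto
  have "hd (rev xs) = last xs" using ne(1) by (simp add: hd_rev)
  then have u1': "adj E (last xs) u1" using u1 by simp
  have a1: "adj E y (last xs)" using s0 ne(1) successively_append_iff[of "adj E" xs "[y]"] adj_sym[of E y "last xs"] by auto
  have a2: "adj E y (hd ys)" using s1 ne(2) by (cases ys) auto
  have "last xs \<noteq> hd ys" using d ne by (metis Un_iff disjoint_iff_not_equal distinct_append
      empty_set hd_in_set last_in_set list.set_intros(2) set_append)
  then show False using lemB[OF tree H h(3) _ a1 a2 u1(1) u1' u2] by blast
qed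

lemma succ_join: "successively R (xs @ [y]) \<Longrightarrow> successively R (y # ys) \<Longrightarrow> successively R (xs @ [y] @ ys)"
  by (induction xs) (auto simp: successively_Cons hd_append)

lemma succ_rev_snoc:
  assumes "successively (adj E) (xs @ [y])"
  shows "successively (adj E) (y # rev xs)"
proof -
  have "successively (\<lambda>a b. adj E b a) (xs @ [y])" using assms adj_sym
    by (metis (no_types, lifting) successively_mono)
  moreover have eq: "rev (xs @ [y]) = y # rev xs" by simp
  ultimately show ?thesis using successively_rev[of "adj E" "xs @ [y]"] unfolding eq by blast
qed

theorem lemma2p2:
  fixes V :: "'a set" and E :: "'a set set"
  assumes "is_tree V E"
    and "\<forall>v. hdv V E v \<longrightarrow>
           card {C \<in> components (del_vertex_V V v) (del_vertex_E E v). card C > 1} \<le> 1"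
  shows "card {v. hdv V E v} \<le> 2"
proof (rule ccontr)
  note tree = assms(1) and H = assms(2)
  assume "\<not> card {v. hdv V E v} \<le> 2"
  then have "3 \<le> card {v. hdv V E v}" by simp
  then obtain T where T: "T \<subseteq> {v. hdv V E v}" "card T = 3" using obtain_subset_with_card_n[OF \<open>3 \<le> card {v. hdv V E v}\<close>] by blast
  then obtain a b c where abc: "T = {a,b,c}" "a \<noteq> b" "b \<noteq> c" "a \<noteq> c" unfolding card_3_iff by blast
  have ha: "hdv V E a" and hb: "hdv V E b" and hc: "hdv V E c" using T abc by auto
  have sg: "simple_graph V E" using tree is_tree_def by blast
  have conn: "\<forall>u\<in>V. \<forall>v\<in>V. reach V E u v"
    using tree unfolding is_tree_def connected_graph_def by blast
  have aV: "a \<in> V" using ha unfolding hdv_def by simp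
  have bV: "b \<in> V" using hb unfolding hdv_def by simp
  have path: "\<exists>P. distinct P \<and> P \<noteq> [] \<and> hd P = u \<and> last P = v \<and> set P \<subseteq> V \<and> successively (adj E) P"
    if uv: "u \<in> V" "v \<in> V" for u v
  proof -
    from conn uv have "reach V E u v" by blast
    then obtain xs where xs: "xs \<noteq> []" "hd xs = u" "last xs = v" "set xs \<subseteq> V" "successively (adj E) xs"
      unfolding reach_def by blast
    obtain ys where ys: "distinct ys" "ys \<noteq> []" "hd ys = hd xs" "last ys = last xs" "set ys \<subseteq> set xs"
      "successively (adj E) ys" using shorten[OF xs(5,1)] by blast
    have "set ys \<subseteq> V" using ys(5) xs(4) by (rule order_trans)
    then show ?thesis using ys xs(2,3) by (intro exI[of _ ys]) simp
  qed
  obtain P where P: "distinct P" "P \<noteq> []" "hd P = a" "last P = b" "set P \<subseteq> V" "successively (adj E) P"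
    using path[OF aV bV] by blast
  show False
  proof (cases "c \<in> set P")
    case True
    then obtain p1 p2 where Pc: "P = p1 @ c # p2" by (meson split_list)
    have "p1 \<noteq> []" using Pc P(3) abc(4) by auto
    moreover have "p2 \<noteq> []" using Pc P(4) abc(3) by auto
    moreover have "hd p1 = a" using Pc P(3) \<open>p1 \<noteq> []\<close> by simp
    moreover have "last p2 = b" using Pc P(4) \<open>p2 \<noteq> []\<close> by simp
    moreover have "distinct (p1 @ [c] @ p2)" using P(1) Pc by simp
    moreover have "successively (adj E) (p1 @ [c] @ p2)" using P(6) Pc by simp
    ultimately show False using lemA[OF tree H, of p1 c p2] hc ha hb by metis
  next
    case False
    have cV: "c \<in> V" using hc unfolding hdv_def by simp
    obtain W where W: "distinct W" "W \<noteq> []" "hd W = c" "last W = a" "set W \<subseteq> V" "successively (adj E) W"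
      using path[OF cV aV] by blast
    have "a \<in> set W" using W(2,4) last_in_set by blast
    moreover have "a \<in> set P" using P(2,3) hd_in_set by blast
    ultimately have "\<exists>x\<in>set W. x \<in> set P" by blast
    then obtain w1 y w2 where Wy: "W = w1 @ y # w2" "y \<in> set P" "\<forall>z\<in>set w1. z \<notin> set P"
      using split_list_first_prop[of W "\<lambda>x. x \<in> set P"] by blast
    have w1ne: "w1 \<noteq> []"
    proof
      assume "w1 = []"
      then have "y = c" using Wy(1) W(3) by simp
      then show False using Wy(2) False by simp
    qed
    have sR: "successively (adj E) (w1 @ [y])"
    proof -
      have "successively (adj E) ((w1 @ [y]) @ w2)" using W(6) Wy(1) by simp
      from successively_append_iff[THEN iffD1, OF this] show ?thesis by blast
    qed
    obtain R where R: "distinct R" "R \<noteq> []" "hd R = hd (w1 @ [y])" "last R = last (w1 @ [y])"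
      "set R \<subseteq> set (w1 @ [y])" "successively (adj E) R"
      using shorten[OF sR] by blast
    have hdR: "hd R = c" using R(3) w1ne Wy(1) W(3) by simp
    have lastR: "last R = y" using R(4) by simp
    define r1 where "r1 = butlast R"
    have Rr: "R = r1 @ [y]" unfolding r1_def using R(2) lastR append_butlast_last_id by metis
    have r1ne: "r1 \<noteq> []"
    proof
      assume "r1 = []"
      then have "y = c" using Rr hdR by simp
      then show False using Wy(2) False by simp
    qed
    have r1P: "z \<notin> set P" if z: "z \<in> set r1" for z
    proof -
      have "z \<noteq> y" using R(1) Rr z by auto
      moreover have "z \<in> set (w1 @ [y])" using R(5) Rr z by auto
      ultimately show ?thesis using Wy(3) by auto
    qed
    have hdr1: "hd r1 = c" using hdR Rr r1ne by simp
    have sr1: "successively (adj E) (r1 @ [y])" using R(6) Rr by simp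
    have dr1: "distinct (r1 @ [y])" using R(1) Rr by simp
    obtain p1 p2 where Py: "P = p1 @ y # p2" using Wy(2) by (meson split_list)
    have sp1: "successively (adj E) (p1 @ [y])" and sp2: "successively (adj E) (y # p2)"
    proof -
      have "successively (adj E) ((p1 @ [y]) @ p2)" using P(6) Py by simp
      from successively_append_iff[THEN iffD1, OF this]
      show "successively (adj E) (p1 @ [y])" by blast
      have "successively (adj E) (p1 @ (y # p2))" using P(6) Py by simp
      from successively_append_iff[THEN iffD1, OF this]
      show "successively (adj E) (y # p2)" by blast
    qed
    have dP: "distinct (p1 @ [y])" "distinct (y # p2)" "set p1 \<inter> set p2 = {}" using P(1) Py by auto
    have hy: "hdv V E y"
    proof (cases "p1 = []")
      case True
      then show ?thesis using Py P(3) ha by simp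
    next
      case p1ne: False
      show ?thesis
      proof (cases "p2 = []")
        case True
        then show ?thesis using Py P(4) hb by simp
      next
        case p2ne: False
        have yV: "y \<in> V" using Wy(2) P(5) by auto
        have n1: "adj E y (last p1)"
          using sp1 p1ne successively_append_iff[of "adj E" p1 "[y]"] adj_sym[of E y "last p1"] by auto
        have n2: "adj E y (hd p2)" using sp2 p2ne by (cases p2) auto
        have n3: "adj E y (last r1)"
          using sr1 r1ne successively_append_iff[of "adj E" r1 "[y]"] adj_sym[of E y "last r1"] by auto
        have "last p1 \<in> set P" "hd p2 \<in> set P" using Py p1ne p2ne by auto
        moreover have "last r1 \<notin> set P" using r1P r1ne by simp
        moreover have "last p1 \<noteq> hd p2" using dP(3) p1ne p2ne by (metis disjoint_iff hd_in_set last_in_set)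
        ultimately have "last r1 \<noteq> last p1" "last r1 \<noteq> hd p2" "last p1 \<noteq> hd p2" by metis+
        then have c3: "card {last p1, hd p2, last r1} = 3" by simp
        have sub: "{last p1, hd p2, last r1} \<subseteq> {u. {u, y} \<in> E}"
          using n1 n2 n3 unfolding adj_def by (auto simp: insert_commute)
        have "{u. {u, y} \<in> E} \<subseteq> V" using adj_V[OF sg] unfolding adj_def by blast
        then have "finite {u. {u, y} \<in> E}" using finite_subset sg unfolding simple_graph_def by blast
        then have "card {last p1, hd p2, last r1} \<le> card {u. {u, y} \<in> E}" using sub by (rule card_mono)
        then show ?thesis unfolding hdv_def degree_def using yV c3 by simp
      qed
    qed
    show False
    proof (cases "p2 = []")
      case p2ne: False
      have d: "distinct (r1 @ [y] @ p2)" using dr1 dP(2) r1P Py by auto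
      have s: "successively (adj E) (r1 @ [y] @ p2)" by (rule succ_join[OF sr1 sp2])
      have "last p2 = b" using P(4) Py p2ne by simp
      then show False using lemA[OF tree H d r1ne p2ne s] hdr1 hc hb hy by simp
    next
      case True
      have p1ne: "p1 \<noteq> []"
      proof
        assume "p1 = []"
        then have "a = b" using Py True P(3,4) by simp
        then show False using abc(2) by simp
      qed
      have d: "distinct (r1 @ [y] @ rev p1)" using dr1 dP(1) r1P Py by auto
      have s: "successively (adj E) (r1 @ [y] @ rev p1)" by (rule succ_join[OF sr1 succ_rev_snoc[OF sp1]])
      have "last (rev p1) = a" using P(3) Py p1ne by (simp add: last_rev)
      moreover have "rev p1 \<noteq> []" using p1ne by simp
      ultimately show False using lemA[OF tree H d r1ne _ s] hdr1 hc ha hy by simp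
    qed
  qed
qed
end
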